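(* For any compilation chain whose traces are finite or infinite sequences of events and any trace relation ${\sim}\subseteq\mathit{Trace}_S\times\mathit{Trace}_T$ with existential and universal images $\tilde\tau,\tilde\sigma$, the following are equivalent: (i) $\mathit{SC}^{\sim}$: for every source program $W$ and every finite target trace prefix $m$, if $W{\downarrow}\rightsquigarrow m$ then there exist a target trace $t$ and a source trace $s$ with $m\le t$, $s\sim t$ and $W\rightsquigarrow s$; (ii) $\mathit{SP}^{\tilde\sigma}$: for every $W$ and every target safety property $\pi_T$, $W\models\tilde\sigma(\pi_T)$ implies $W{\downarrow}\models\pi_T$; (iii) $\mathit{SP}^{\tilde\tau}$: for every $W$ and every $\pi_S\subseteq\mathit{Trace}_S$, $W\models\pi_S$ implies $W{\downarrow}\models(\mathit{Safe}\circ\tilde\tau)(\pi_S)$.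
   Context: A compilation chain consists of source (whole) programs $W$, target programs, sets $\mathit{Trace}_S,\mathit{Trace}_T$ of traces, semantics relations $W\rightsquigarrow t$ (W can produce $t$) at both levels, and a compiler $W\mapsto W{\downarrow}$. $W\models\pi$ iff every trace produced by $W$ is in $\pi$. $m\le t$ means $m$ is a finite prefix of $t$; $W\rightsquigarrow m$ for a finite prefix $m$ means there is $t$ with $m\le t$ and $W\rightsquigarrow t$. A target property $\pi$ is a safety property iff for every $t\notin\pi$ there is $m\le t$ such that every $t'$ with $m\le t'$ satisfies $t'\notin\pi$. $\mathit{Safe}(\pi)$ is the intersection of all target safety properties containing $\pi$. The existential image of $\sim$ is $\tilde\tau(\pi)=\{t\mid\exists s.\ s\sim t\wedge s\in\pi\}$ and its universal image is $\tilde\sigma(\pi)=\{s\mid\forall t.\ s\sim t\Rightarrow t\in\pi\}$. *)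

theory Defs
  imports Main
begin

datatype 'e trace = FinT "'e list" | InfT "nat \<Rightarrow> 'e"

fun prefix_of :: "'e list \<Rightarrow> 'e trace \<Rightarrow> bool" where
  "prefix_of m (FinT l) = (\<exists>r. l = m @ r)"
| "prefix_of m (InfT f) = (m = map f [0..<length m])"

definition produces_prefix :: "('w \<Rightarrow> 'e trace \<Rightarrow> bool) \<Rightarrow> 'w \<Rightarrow> 'e list \<Rightarrow> bool" where
  "produces_prefix sem W m \<longleftrightarrow> (\<exists>t. prefix_of m t \<and> sem W t)"

definition sat :: "('w \<Rightarrow> 't \<Rightarrow> bool) \<Rightarrow> 'w \<Rightarrow> 't set \<Rightarrow> bool" where
  "sat sem W \<pi> \<longleftrightarrow> (\<forall>t. sem W t \<longrightarrow> t \<in> \<pi>)"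

definition safety :: "'e trace set \<Rightarrow> bool" where
  "safety \<pi> \<longleftrightarrow> (\<forall>t. t \<notin> \<pi> \<longrightarrow> (\<exists>m. prefix_of m t \<and> (\<forall>t'. prefix_of m t' \<longrightarrow> t' \<notin> \<pi>)))"

definition Safe :: "'e trace set \<Rightarrow> 'e trace set" where
  "Safe \<pi> = \<Inter> {\<pi>'. safety \<pi>' \<and> \<pi> \<subseteq> \<pi>'}"

definition tau_img :: "('s \<Rightarrow> 't \<Rightarrow> bool) \<Rightarrow> 's set \<Rightarrow> 't set" where
  "tau_img rel \<pi> = {t. \<exists>s. rel s t \<and> s \<in> \<pi>}"

definition sigma_img :: "('s \<Rightarrow> 't \<Rightarrow> bool) \<Rightarrow> 't set \<Rightarrow> 's set" where
  "sigma_img rel \<pi> = {s. \<forall>t. rel s t \<longrightarrow> t \<in> \<pi>}"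

end

theory Submission
  imports Defs
begin

lemma safety_notpref: "safety {t. \<not> prefix_of m t}"
  unfolding safety_def by auto

theorem theoremB1:
  fixes semS :: "'wS \<Rightarrow> 'eS trace \<Rightarrow> bool"
    and semT :: "'wT \<Rightarrow> 'eT trace \<Rightarrow> bool"
    and comp :: "'wS \<Rightarrow> 'wT"
    and rel :: "'eS trace \<Rightarrow> 'eT trace \<Rightarrow> bool"
  shows
   "((\<forall>W m. produces_prefix semT (comp W) m \<longrightarrow>
        (\<exists>t s. prefix_of m t \<and> rel s t \<and> semS W s))
     \<longleftrightarrow>
     (\<forall>W \<pi>T. safety \<pi>T \<longrightarrow> sat semS W (sigma_img rel \<pi>T) \<longrightarrow> sat semT (comp W) \<pi>T))
   \<and>
   ((\<forall>W \<pi>T. safety \<pi>T \<longrightarrow> sat semS W (sigma_img rel \<pi>T) \<longrightarrow> sat semT (comp W) \<pi>T)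
     \<longleftrightarrow>
     (\<forall>W \<pi>S. sat semS W \<pi>S \<longrightarrow> sat semT (comp W) (Safe (tau_img rel \<pi>S))))"
proof (intro conjI iffI allI impI)
  fix W and \<pi>T :: "'eT trace set"
  assume A: "\<forall>W m. produces_prefix semT (comp W) m \<longrightarrow> (\<exists>t s. prefix_of m t \<and> rel s t \<and> semS W s)"
    and S: "safety \<pi>T" and H: "sat semS W (sigma_img rel \<pi>T)"
  show "sat semT (comp W) \<pi>T"
    unfolding sat_def
  proof (intro allI impI)
    fix t assume T: "semT (comp W) t"
    show "t \<in> \<pi>T"
    proof (rule ccontr)
      assume "t \<notin> \<pi>T"
      then obtain m where m: "prefix_of m t" "\<forall>t'. prefix_of m t' \<longrightarrow> t' \<notin> \<pi>T"
        using S unfolding safety_def by blast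
      then have "produces_prefix semT (comp W) m" using T unfolding produces_prefix_def by blast
      then obtain t' s where "prefix_of m t'" "rel s t'" "semS W s" using A by blast
      with H m show False unfolding sat_def sigma_img_def by blast
    qed
  qed
next
  fix W m
  assume B: "\<forall>W \<pi>T. safety \<pi>T \<longrightarrow> sat semS W (sigma_img rel \<pi>T) \<longrightarrow> sat semT (comp W) \<pi>T"
    and P: "produces_prefix semT (comp W) m"
  show "\<exists>t s. prefix_of m t \<and> rel s t \<and> semS W s"
  proof (rule ccontr)
    assume N: "\<not> ?thesis"
    have "sat semS W (sigma_img rel {t. \<not> prefix_of m t})"
      using N unfolding sat_def sigma_img_def by blast
    then have "sat semT (comp W) {t. \<not> prefix_of m t}" using B safety_notpref by blast
    with P show False unfolding sat_def produces_prefix_def by blast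
  qed
next
  fix W and \<pi>S :: "'eS trace set"
  assume B: "\<forall>W \<pi>T. safety \<pi>T \<longrightarrow> sat semS W (sigma_img rel \<pi>T) \<longrightarrow> sat semT (comp W) \<pi>T"
    and H: "sat semS W \<pi>S"
  have "\<forall>\<pi>'. safety \<pi>' \<and> tau_img rel \<pi>S \<subseteq> \<pi>' \<longrightarrow> sat semT (comp W) \<pi>'"
  proof (intro allI impI)
    fix \<pi>' assume C: "safety \<pi>' \<and> tau_img rel \<pi>S \<subseteq> \<pi>'"
    have "sat semS W (sigma_img rel \<pi>')"
      using H C unfolding sat_def sigma_img_def tau_img_def by blast
    then show "sat semT (comp W) \<pi>'" using B C by blast
  qed
  then show "sat semT (comp W) (Safe (tau_img rel \<pi>S))"
    unfolding sat_def Safe_def by blast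
next
  fix W and \<pi>T :: "'eT trace set"
  assume D: "\<forall>W \<pi>S. sat semS W \<pi>S \<longrightarrow> sat semT (comp W) (Safe (tau_img rel \<pi>S))"
    and S: "safety \<pi>T" and H: "sat semS W (sigma_img rel \<pi>T)"
  have "sat semT (comp W) (Safe (tau_img rel (sigma_img rel \<pi>T)))" using D H by blast
  moreover have "Safe (tau_img rel (sigma_img rel \<pi>T)) \<subseteq> \<pi>T"
    using S unfolding Safe_def tau_img_def sigma_img_def by blast
  ultimately show "sat semT (comp W) \<pi>T" unfolding sat_def by blast
qed

end
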